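(* Let $c,d\ge 2$, let $\overline{Z}=\mathbb{C}^{N}$, $N=\binom{c+d}{2}$, be the Plücker coordinate space $\bigwedge^2(V\oplus W)$ with coordinates $T_{ij}$, $1\le i<j\le c+d$ (indices $1,\dots,c$ corresponding to $V$, $c+1,\dots,c+d$ to $W$), and let $\overline{X}\subseteq\overline{Z}$ be the affine cone over the Grassmannian $G(2,V\oplus W)$, defined by the Plücker relations $T_{ij}T_{kl}-T_{ik}T_{jl}+T_{il}T_{jk}$, $1\le i<j<k<l\le c+d$. Let the torus $\mathbb{T}^2=(\mathbb{C}^* )^2$ act diagonally on $\overline{Z}$, where $T_{ij}$ has weight $(1,1)$ if $i,j\le c$, weight $(1,0)$ if $i\le c<j$, and weight $(1,-1)$ if $c+1\le i,j$. Then the $\mathbb{T}^2$-actions on $\overline{Z}$ and on $\overline{X}$ have the same GIT-fan $\Lambda$, and the maximal cones of $\Lambda$ are $\lambda_1=\operatorname{cone}((1,1),(1,0))$ and $\lambda_2=\operatorname{cone}((1,0),(1,-1))$.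
   Context: For a torus $T$ acting on an affine variety $\overline{Y}$, for $y\in\overline{Y}$ let $\omega_y\subseteq\mathbb{X}_{\mathbb{Q}}(T)$ be the cone generated by the degrees of homogeneous $f\in\mathcal{O}(\overline{Y})$ with $f(y)\ne0$. For $w\in\mathbb{X}_{\mathbb{Q}}(T)$ the GIT-chamber is $\lambda(w)=\bigcap_{y\in\overline{Y},\,w\in\omega_y}\omega_y$, and the GIT-fan is the collection of all GIT-chambers $\lambda(w)$ (in the cone of weights $w$ for which the intersection is over a nonempty set). *)

theory Defs
  imports Complex_Main
begin

inductive_set polyfun :: "(('v \<Rightarrow> complex) \<Rightarrow> complex) set" where
  pf_const: "(\<lambda>z. a) \<in> polyfun"
| pf_coord: "(\<lambda>z. z p) \<in> polyfun"
| pf_add: "f \<in> polyfun \<Longrightarrow> g \<in> polyfun \<Longrightarrow> (\<lambda>z. f z + g z) \<in> polyfun"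
| pf_mult: "f \<in> polyfun \<Longrightarrow> g \<in> polyfun \<Longrightarrow> (\<lambda>z. f z * g z) \<in> polyfun"

definition torus_act :: "('v \<Rightarrow> int \<times> int) \<Rightarrow> complex \<Rightarrow> complex \<Rightarrow> ('v \<Rightarrow> complex) \<Rightarrow> ('v \<Rightarrow> complex)" where
  "torus_act wt t1 t2 z = (\<lambda>p. t1 powi fst (wt p) * t2 powi snd (wt p) * z p)"

definition homogeneous_on :: "('v \<Rightarrow> int \<times> int) \<Rightarrow> ('v \<Rightarrow> complex) set \<Rightarrow> int \<times> int \<Rightarrow> (('v \<Rightarrow> complex) \<Rightarrow> complex) \<Rightarrow> bool" where
  "homogeneous_on wt Y w f \<longleftrightarrow> f \<in> polyfun \<and>
     (\<forall>t1 t2 y. t1 \<noteq> 0 \<longrightarrow> t2 \<noteq> 0 \<longrightarrow> y \<in> Y \<longrightarrow>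
        f (torus_act wt t1 t2 y) = t1 powi fst w * t2 powi snd w * f y)"

definition qcone :: "(rat \<times> rat) set \<Rightarrow> (rat \<times> rat) set" where
  "qcone S = {x. \<exists>F a. finite F \<and> F \<subseteq> S \<and> (\<forall>v\<in>F. a v \<ge> 0) \<and>
      x = ((\<Sum>v\<in>F. a v * fst v), (\<Sum>v\<in>F. a v * snd v))}"

definition rat_wt :: "int \<times> int \<Rightarrow> rat \<times> rat" where
  "rat_wt w = (of_int (fst w), of_int (snd w))"

definition orbit_cone :: "('v \<Rightarrow> int \<times> int) \<Rightarrow> ('v \<Rightarrow> complex) set \<Rightarrow> ('v \<Rightarrow> complex) \<Rightarrow> (rat \<times> rat) set" where
  "orbit_cone wt Y y = qcone {rat_wt w | w. \<exists>f. homogeneous_on wt Y w f \<and> f y \<noteq> 0}"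

definition git_chamber :: "('v \<Rightarrow> int \<times> int) \<Rightarrow> ('v \<Rightarrow> complex) set \<Rightarrow> rat \<times> rat \<Rightarrow> (rat \<times> rat) set" where
  "git_chamber wt Y w = \<Inter> {orbit_cone wt Y y | y. y \<in> Y \<and> w \<in> orbit_cone wt Y y}"

definition git_fan :: "('v \<Rightarrow> int \<times> int) \<Rightarrow> ('v \<Rightarrow> complex) set \<Rightarrow> (rat \<times> rat) set set" where
  "git_fan wt Y = {git_chamber wt Y w | w. \<exists>y\<in>Y. w \<in> orbit_cone wt Y y}"

definition pl_idx :: "nat \<Rightarrow> nat \<Rightarrow> (nat \<times> nat) set" where
  "pl_idx c d = {(i, j). 1 \<le> i \<and> i < j \<and> j \<le> c + d}"

definition Zbar :: "nat \<Rightarrow> nat \<Rightarrow> ((nat \<times> nat) \<Rightarrow> complex) set" where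
  "Zbar c d = {z. \<forall>p. p \<notin> pl_idx c d \<longrightarrow> z p = 0}"

definition Xbar :: "nat \<Rightarrow> nat \<Rightarrow> ((nat \<times> nat) \<Rightarrow> complex) set" where
  "Xbar c d = {z \<in> Zbar c d. \<forall>i j k l. 1 \<le> i \<and> i < j \<and> j < k \<and> k < l \<and> l \<le> c + d \<longrightarrow>
      z (i, j) * z (k, l) - z (i, k) * z (j, l) + z (i, l) * z (j, k) = 0}"

definition pl_wt :: "nat \<Rightarrow> nat \<times> nat \<Rightarrow> int \<times> int" where
  "pl_wt c p = (if snd p \<le> c then (1, 1) else if fst p \<le> c then (1, 0) else (1, -1))"

end

theory Submission
  imports Defs
begin

lemma polyfun_isCont:
  fixes m :: "'v \<Rightarrow> nat" and y :: "'v \<Rightarrow> complex"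
  assumes "f \<in> polyfun"
  shows "isCont (\<lambda>s::real. f (\<lambda>p. complex_of_real s ^ m p * y p)) x"
  using assms
proof (induction f)
  case (pf_const a) then show ?case by simp
next
  case (pf_coord p) then show ?case by (intro isCont_mult isCont_power isCont_of_real continuous_ident continuous_const)
next
  case (pf_add f g) then show ?case by (intro isCont_add)
next
  case (pf_mult f g) then show ?case by (intro isCont_mult)
qed

lemma key_limit:
  fixes g :: "real \<Rightarrow> complex"
  assumes "isCont g 0" and "N > 0" and "\<And>s. s > 0 \<Longrightarrow> g s * complex_of_real s ^ N = a"
  shows "a = 0"
proof -
  have "(g \<longlongrightarrow> g 0) (at_right 0)"
    using assms(1) by (simp add: isCont_def filterlim_at_split)
  then have "((\<lambda>s. g s * complex_of_real s ^ N) \<longlongrightarrow> g 0 * complex_of_real 0 ^ N) (at_right 0)"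
    by (intro tendsto_intros)
  then have "((\<lambda>s. g s * complex_of_real s ^ N) \<longlongrightarrow> 0) (at_right 0)"
    using assms(2) by (simp add: zero_power)
  note lim = this
  have "eventually (\<lambda>s. s > 0) (at_right (0::real))" by (rule eventually_at_right_less)
  then have ev: "eventually (\<lambda>s. g s * complex_of_real s ^ N = a) (at_right (0::real))"
    by (rule eventually_mono) (rule assms(3))
  have "((\<lambda>s. a) \<longlongrightarrow> 0) (at_right (0::real))"
    using iffD1[OF tendsto_cong[OF ev] lim] .
  then show ?thesis by (simp add: tendsto_const_iff)
qed


lemma pl_wt_fst[simp]: "fst (pl_wt c p) = 1"
  by (simp add: pl_wt_def)

lemma powi_combine:
  fixes s :: real and k1 k2 e :: int
  assumes "s > 0" "k1 + k2 * e \<ge> 0"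
  shows "complex_of_real s powi k1 * (complex_of_real s powi k2) powi e
         = complex_of_real s ^ nat (k1 + k2 * e)"
proof -
  have nz: "complex_of_real s \<noteq> 0" using assms by simp
  have "complex_of_real s powi k1 * (complex_of_real s powi k2) powi e
      = complex_of_real s powi k1 * complex_of_real s powi (k2 * e)"
    by (simp add: power_int_mult)
  also have "\<dots> = complex_of_real s powi (k1 + k2 * e)"
    using nz by (simp add: power_int_add)
  also have "\<dots> = complex_of_real s powi (int (nat (k1 + k2 * e)))"
    using assms by simp
  also have "\<dots> = complex_of_real s ^ nat (k1 + k2 * e)"
    by (rule power_int_of_nat)
  finally show ?thesis .
qed

lemma key:
  assumes hom: "homogeneous_on (pl_wt c) Y w f" and fy: "f y \<noteq> 0" and yY: "y \<in> Y"
  and pos: "\<forall>p. y p \<noteq> 0 \<longrightarrow> 0 \<le> k1 + k2 * snd (pl_wt c p)"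
  shows "0 \<le> k1 * fst w + k2 * snd w"
proof (rule ccontr)
  assume neg: "\<not> ?thesis"
  define N where "N = nat (-(k1 * fst w + k2 * snd w))"
  define m where "m p = nat (k1 + k2 * snd (pl_wt c p))" for p
  define g where "g s = f (\<lambda>p. complex_of_real s ^ m p * y p)" for s
  have N: "N > 0" using neg by (simp add: N_def)
  have pf: "f \<in> polyfun" using hom by (simp add: homogeneous_on_def)
  have cont: "isCont g 0" unfolding g_def by (rule polyfun_isCont[OF pf])
  have "g s * complex_of_real s ^ N = f y" if s: "s > 0" for s
  proof -
    let ?t1 = "complex_of_real s powi k1" and ?t2 = "complex_of_real s powi k2"
    have nz: "complex_of_real s \<noteq> 0" using s by simp
    have t: "torus_act (pl_wt c) ?t1 ?t2 y = (\<lambda>p. complex_of_real s ^ m p * y p)"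
    proof
      fix p
      show "torus_act (pl_wt c) ?t1 ?t2 y p = complex_of_real s ^ m p * y p"
      proof (cases "y p = 0")
        case True then show ?thesis by (simp add: torus_act_def)
      next
        case False
        then have "0 \<le> k1 + k2 * snd (pl_wt c p)" using pos by blast
        then show ?thesis
          using powi_combine[OF s, of k1 k2 "snd (pl_wt c p)"]
          by (simp add: torus_act_def m_def)
      qed
    qed
    have "f (torus_act (pl_wt c) ?t1 ?t2 y) = ?t1 powi fst w * ?t2 powi snd w * f y"
      using hom yY nz by (simp add: homogeneous_on_def)
    then have "g s = ?t1 powi fst w * ?t2 powi snd w * f y"
      using t by (simp add: g_def)
    also have "?t1 powi fst w * ?t2 powi snd w = complex_of_real s powi (k1 * fst w + k2 * snd w)"
      using nz by (simp add: power_int_mult[symmetric] power_int_add mult.commute)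
    also have "\<dots> = complex_of_real s powi (- int N)"
      using neg by (simp add: N_def add.commute)
    finally have "g s = complex_of_real s powi (- int N) * f y" .
    then show ?thesis using nz by (simp add: power_int_minus field_simps)
  qed
  then have "f y = 0" using key_limit[OF cont N] by blast
  with fy show False by simp
qed


definition hp :: "rat \<Rightarrow> rat \<Rightarrow> (rat \<times> rat) set" where
  "hp a b = {w. 0 \<le> a * fst w + b * snd w}"

lemma hp_mem[simp]: "(x, y) \<in> hp a b \<longleftrightarrow> 0 \<le> a * x + b * y"
  by (simp add: hp_def)

definition cc :: "(rat \<times> rat) set \<Rightarrow> bool" where
  "cc D \<longleftrightarrow> (0, 0) \<in> D \<and> (\<forall>x\<in>D. \<forall>y\<in>D. (fst x + fst y, snd x + snd y) \<in> D)
      \<and> (\<forall>a x. a \<ge> 0 \<longrightarrow> x \<in> D \<longrightarrow> (a * fst x, a * snd x) \<in> D)"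

lemma cc_hp: "cc (hp a b)"
proof -
  have scal: "0 \<le> a * (t * x) + b * (t * y)" if "0 \<le> a * x + b * y" "t \<ge> 0" for t x y
  proof -
    have "a * (t * x) + b * (t * y) = t * (a * x + b * y)" by (simp add: algebra_simps)
    then show ?thesis using that by simp
  qed
  have add: "0 \<le> a * (x1 + x2) + b * (y1 + y2)" if "0 \<le> a * x1 + b * y1" "0 \<le> a * x2 + b * y2" for x1 x2 y1 y2
  proof -
    have "a * (x1 + x2) + b * (y1 + y2) = (a * x1 + b * y1) + (a * x2 + b * y2)" by (simp add: algebra_simps)
    then show ?thesis using that by simp
  qed
  show ?thesis unfolding cc_def hp_def using scal add by auto
qed

lemma cc_Int: "cc A \<Longrightarrow> cc B \<Longrightarrow> cc (A \<inter> B)"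
  unfolding cc_def by blast

lemma qcone_sub:
  assumes "S \<subseteq> D" "cc D"
  shows "qcone S \<subseteq> D"
proof
  fix x assume "x \<in> qcone S"
  then obtain F a where F: "finite F" "F \<subseteq> S" "\<forall>v\<in>F. a v \<ge> 0"
    and x: "x = ((\<Sum>v\<in>F. a v * fst v), (\<Sum>v\<in>F. a v * snd v))"
    unfolding qcone_def by blast
  have "F \<subseteq> S \<longrightarrow> (\<forall>v\<in>F. a v \<ge> 0) \<longrightarrow> ((\<Sum>v\<in>F. a v * fst v), (\<Sum>v\<in>F. a v * snd v)) \<in> D"
    using F(1)
  proof (induction F rule: finite_induct)
    case empty then show ?case using assms(2) by (simp add: cc_def)
  next
    case (insert v F)
    show ?case
    proof (intro impI)
      assume h: "insert v F \<subseteq> S" "\<forall>u\<in>insert v F. a u \<ge> 0"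
      then have r: "((\<Sum>v\<in>F. a v * fst v), (\<Sum>v\<in>F. a v * snd v)) \<in> D" using insert by blast
      have "(a v * fst v, a v * snd v) \<in> D" using h assms by (auto simp: cc_def)
      then have "(a v * fst v + (\<Sum>v\<in>F. a v * fst v), a v * snd v + (\<Sum>v\<in>F. a v * snd v)) \<in> D"
        using r assms(2) unfolding cc_def by (metis fst_conv snd_conv)
      then show "((\<Sum>v\<in>insert v F. a v * fst v), (\<Sum>v\<in>insert v F. a v * snd v)) \<in> D"
        using insert by simp
    qed
  qed
  then show "x \<in> D" using F x by blast
qed

lemma qcone_mono: "S \<subseteq> T \<Longrightarrow> qcone S \<subseteq> qcone T"
  unfolding qcone_def by blast

lemma qcone_zero: "(0, 0) \<in> qcone S"
  unfolding qcone_def by (rule CollectI, rule exI[of _ "{}"]) auto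

lemma qcone_one: "\<alpha> \<ge> 0 \<Longrightarrow> (\<alpha> * fst u, \<alpha> * snd u) \<in> qcone {u}"
  unfolding qcone_def by (rule CollectI, rule exI[of _ "{u}"], rule exI[of _ "\<lambda>_. \<alpha>"]) auto

lemma qcone_two: "u \<noteq> v \<Longrightarrow> \<alpha> \<ge> 0 \<Longrightarrow> \<beta> \<ge> 0 \<Longrightarrow>
   (\<alpha> * fst u + \<beta> * fst v, \<alpha> * snd u + \<beta> * snd v) \<in> qcone {u, v}"
  unfolding qcone_def
  by (rule CollectI, rule exI[of _ "{u,v}"], rule exI[of _ "\<lambda>x. if x = u then \<alpha> else \<beta>"]) auto

definition "O0 = hp 1 0 \<inter> hp (-1) 0 \<inter> hp 0 1 \<inter> hp 0 (-1)"
definition "Ra = hp 1 (-1) \<inter> hp (-1) 1 \<inter> hp 1 0"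
definition "Rb = hp 0 1 \<inter> hp 0 (-1) \<inter> hp 1 0"
definition "Rc = hp 1 1 \<inter> hp (-1) (-1) \<inter> hp 1 0"
definition "Cab = hp 0 1 \<inter> hp 1 (-1)"
definition "Cbc = hp 0 (-1) \<inter> hp 1 1"
definition "Cac = hp 1 1 \<inter> hp 1 (-1)"

lemmas cone_defs = O0_def Ra_def Rb_def Rc_def Cab_def Cbc_def Cac_def

lemma cc_cones: "cc O0" "cc Ra" "cc Rb" "cc Rc" "cc Cab" "cc Cbc" "cc Cac"
  unfolding cone_defs by (intro cc_Int cc_hp)+

lemma O0_sub: "O0 \<subseteq> qcone S"
proof
  fix w assume "w \<in> O0"
  then have "w = (0,0)" by (cases w) (auto simp: O0_def)
  then show "w \<in> qcone S" using qcone_zero by simp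
qed

lemma Ra_sub: "Ra \<subseteq> qcone {(1,1)}"
proof
  fix w assume "w \<in> Ra"
  then obtain x where "w = (x, x)" "x \<ge> 0" by (cases w) (auto simp: Ra_def)
  then show "w \<in> qcone {(1,1)}" using qcone_one[of x "(1,1)"] by simp
qed

lemma Rb_sub: "Rb \<subseteq> qcone {(1,0)}"
proof
  fix w assume "w \<in> Rb"
  then obtain x where "w = (x, 0)" "x \<ge> 0" by (cases w) (auto simp: Rb_def)
  then show "w \<in> qcone {(1,0)}" using qcone_one[of x "(1,0)"] by simp
qed

lemma Rc_sub: "Rc \<subseteq> qcone {(1,-1)}"
proof
  fix w assume "w \<in> Rc"
  then obtain x where "w = (x, -x)" "x \<ge> 0" by (cases w) (auto simp: Rc_def)
  then show "w \<in> qcone {(1,-1)}" using qcone_one[of x "(1,-1)"] by simp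
qed

lemma Cab_sub: "Cab \<subseteq> qcone {(1,1),(1,0)}"
proof
  fix w assume "w \<in> Cab"
  then obtain x y where w: "w = (x, y)" "0 \<le> y" "y \<le> x" by (cases w) (auto simp: Cab_def)
  then show "w \<in> qcone {(1,1),(1,0)}" using qcone_two[of "(1,1)" "(1,0)" y "x - y"] by simp
qed

lemma Cbc_sub: "Cbc \<subseteq> qcone {(1,0),(1,-1)}"
proof
  fix w assume "w \<in> Cbc"
  then obtain x y where w: "w = (x, y)" "y \<le> 0" "-x \<le> y" by (cases w) (auto simp: Cbc_def)
  then show "w \<in> qcone {(1,0),(1,-1)}" using qcone_two[of "(1,0)" "(1,-1)" "x + y" "-y"] by simp
qed

lemma Cac_sub: "Cac \<subseteq> qcone {(1,1),(1,-1)}"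
proof
  fix w assume "w \<in> Cac"
  then obtain x y where w: "w = (x, y)" "-x \<le> y" "y \<le> x" by (cases w) (auto simp: Cac_def)
  then show "w \<in> qcone {(1,1),(1,-1)}"
    using qcone_two[of "(1,1)" "(1,-1)" "(x + y)/2" "(x - y)/2"] by (simp add: field_simps)
qed

lemma qcone_Cab: "qcone {(1,1),(1,0)} = Cab"
  using Cab_sub qcone_sub[of "{(1,1),(1,0)}" Cab] cc_cones by (auto simp: Cab_def)

lemma qcone_Cbc: "qcone {(1,0),(1,-1)} = Cbc"
  using Cbc_sub qcone_sub[of "{(1,0),(1,-1)}" Cbc] cc_cones by (auto simp: Cbc_def)

definition cone3 :: "bool \<Rightarrow> bool \<Rightarrow> bool \<Rightarrow> (rat \<times> rat) set" where
  "cone3 A B C = (if A \<and> C then Cac else if A \<and> B then Cab else if B \<and> C then Cbc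
     else if A then Ra else if B then Rb else if C then Rc else O0)"

lemma cc_cone3: "cc (cone3 A B C)"
  unfolding cone3_def using cc_cones by auto

lemma coord_hom: "homogeneous_on wt Y (wt p) (\<lambda>z. z p)"
  by (simp add: homogeneous_on_def torus_act_def polyfun.pf_coord)

lemma orbit_cone_eq:
  assumes yY: "y \<in> Y"
  shows "orbit_cone (pl_wt c) Y y = cone3 (\<exists>p. y p \<noteq> 0 \<and> pl_wt c p = (1,1))
      (\<exists>p. y p \<noteq> 0 \<and> pl_wt c p = (1,0)) (\<exists>p. y p \<noteq> 0 \<and> pl_wt c p = (1,-1))"
proof -
  define A where "A = (\<exists>p. y p \<noteq> 0 \<and> pl_wt c p = (1,1))"
  define B where "B = (\<exists>p. y p \<noteq> 0 \<and> pl_wt c p = (1,0))"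
  define C where "C = (\<exists>p. y p \<noteq> 0 \<and> pl_wt c p = (1,-1))"
  define W where "W = {rat_wt w | w. \<exists>f. homogeneous_on (pl_wt c) Y w f \<and> f y \<noteq> 0}"
  have ocW: "orbit_cone (pl_wt c) Y y = qcone W" by (simp add: orbit_cone_def W_def)
  have gen: "rat_wt u \<in> W" if ex: "\<exists>p. y p \<noteq> 0 \<and> pl_wt c p = u" for u
  proof -
    obtain p where p: "y p \<noteq> 0" "pl_wt c p = u" using ex by blast
    have "homogeneous_on (pl_wt c) Y u (\<lambda>z. z p)" using coord_hom[of "pl_wt c" Y p] p by simp
    then show ?thesis unfolding W_def using p by blast
  qed
  have gA: "A \<Longrightarrow> (1,1) \<in> W" using gen[of "(1,1)"] by (simp add: A_def rat_wt_def)
  have gB: "B \<Longrightarrow> (1,0) \<in> W" using gen[of "(1,0)"] by (simp add: B_def rat_wt_def)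
  have gC: "C \<Longrightarrow> (1,-1) \<in> W" using gen[of "(1,-1)"] by (simp add: C_def rat_wt_def)
  have upper: "W \<subseteq> cone3 A B C"
  proof
    fix v assume "v \<in> W"
    then obtain w f where v: "v = rat_wt w" and hom: "homogeneous_on (pl_wt c) Y w f"
      and fy: "f y \<noteq> 0" unfolding W_def by blast
    have K: "0 \<le> k1 * fst w + k2 * snd w"
      if kA: "A \<longrightarrow> 0 \<le> k1 + k2" and kB: "B \<longrightarrow> 0 \<le> k1" and kC: "C \<longrightarrow> 0 \<le> k1 - k2" for k1 k2
    proof (rule key[OF hom fy yY], intro allI impI)
      fix p assume yp: "y p \<noteq> 0"
      show "0 \<le> k1 + k2 * snd (pl_wt c p)"
      proof (cases "snd p \<le> c")
        case True
        then have "pl_wt c p = (1,1)" by (simp add: pl_wt_def)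
        then have A using yp A_def by blast
        then show ?thesis using kA \<open>pl_wt c p = (1,1)\<close> by simp
      next
        case False
        show ?thesis
        proof (cases "fst p \<le> c")
          case True
          then have "pl_wt c p = (1,0)" using False by (simp add: pl_wt_def)
          then have B using yp B_def by blast
          then show ?thesis using kB \<open>pl_wt c p = (1,0)\<close> by simp
        next
          case F2: False
          then have "pl_wt c p = (1,-1)" using False by (simp add: pl_wt_def)
          then have C using yp C_def by blast
          then show ?thesis using kC \<open>pl_wt c p = (1,-1)\<close> by simp
        qed
      qed
    qed
    have f1: "0 \<le> fst w" using K[of 1 0] by simp
    have f2: "\<not>C \<Longrightarrow> 0 \<le> snd w" using K[of 0 1] by simp
    have f3: "\<not>A \<Longrightarrow> snd w \<le> 0" using K[of 0 "-1"] by simp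
    have f4: "0 \<le> fst w + snd w" using K[of 1 1] by simp
    have f5: "snd w \<le> fst w" using K[of 1 "-1"] by simp
    have f6: "\<not>B \<Longrightarrow> \<not>C \<Longrightarrow> fst w \<le> snd w" using K[of "-1" 1] by simp
    have f7: "\<not>A \<Longrightarrow> \<not>B \<Longrightarrow> fst w + snd w \<le> 0" using K[of "-1" "-1"] by simp
    have f8: "\<not>A \<Longrightarrow> \<not>B \<Longrightarrow> \<not>C \<Longrightarrow> fst w \<le> 0" using K[of "-1" 0] by simp
    show "v \<in> cone3 A B C" unfolding v
      using f1 f2 f3 f4 f5 f6 f7 f8
      by (cases A; cases B; cases C) (simp_all add: cone3_def cone_defs rat_wt_def)
  qed
  have lower: "cone3 A B C \<subseteq> qcone W"
  proof (cases A; cases B; cases C)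
    assume "A" "B" "C"
    then show ?thesis using Cac_sub qcone_mono[of "{(1,1),(1,-1)}" W] gA gC by (auto simp: cone3_def)
  next
    assume "A" "\<not>B" "C"
    then show ?thesis using Cac_sub qcone_mono[of "{(1,1),(1,-1)}" W] gA gC by (auto simp: cone3_def)
  next
    assume "A" "B" "\<not> C"
    then show ?thesis using Cab_sub qcone_mono[of "{(1,1),(1,0)}" W] gA gB by (auto simp: cone3_def)
  next
    assume "\<not>A" "B" "C"
    then show ?thesis using Cbc_sub qcone_mono[of "{(1,0),(1,-1)}" W] gB gC by (auto simp: cone3_def)
  next
    assume "A" "\<not>B" "\<not> C"
    then show ?thesis using Ra_sub qcone_mono[of "{(1,1)}" W] gA by (auto simp: cone3_def)
  next
    assume "\<not>A" "B" "\<not> C"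
    then show ?thesis using Rb_sub qcone_mono[of "{(1,0)}" W] gB by (auto simp: cone3_def)
  next
    assume "\<not>A" "\<not>B" "C"
    then show ?thesis using Rc_sub qcone_mono[of "{(1,-1)}" W] gC by (auto simp: cone3_def)
  next
    assume "\<not>A" "\<not>B" "\<not>C"
    then show ?thesis using O0_sub by (auto simp: cone3_def)
  qed
  have "qcone W \<subseteq> cone3 A B C" using qcone_sub[OF upper cc_cone3] .
  then show ?thesis using lower ocW A_def B_def C_def by auto
qed

definition chi :: "rat \<times> rat \<Rightarrow> (rat \<times> rat) set" where
  "chi w = (if w = (0,0) then O0 else if fst w = snd w then Ra else if snd w = 0 then Rb
     else if snd w = - fst w then Rc else if snd w > 0 then Cab else Cbc)"

definition "Opr = {O0, Ra, Rb, Rc, Cab, Cbc}"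
definition "Ofull = {O0, Ra, Rb, Rc, Cab, Cbc, Cac}"

lemma chi_in: "chi w \<in> Opr"
  by (simp add: chi_def Opr_def)

lemma mem_cones[simp]:
  "(x, y) \<in> O0 \<longleftrightarrow> x = 0 \<and> y = 0"
  "(x, y) \<in> Ra \<longleftrightarrow> x = y \<and> 0 \<le> x"
  "(x, y) \<in> Rb \<longleftrightarrow> y = 0 \<and> 0 \<le> x"
  "(x, y) \<in> Rc \<longleftrightarrow> y = - x \<and> 0 \<le> x"
  "(x, y) \<in> Cab \<longleftrightarrow> 0 \<le> y \<and> y \<le> x"
  "(x, y) \<in> Cbc \<longleftrightarrow> y \<le> 0 \<and> - x \<le> y"
  "(x, y) \<in> Cac \<longleftrightarrow> - x \<le> y \<and> y \<le> x"
  by (auto simp: cone_defs)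

lemma chi_mem: "w \<in> Cac \<Longrightarrow> w \<in> chi w"
proof -
  assume "w \<in> Cac"
  moreover obtain x y where w: "w = (x, y)" by (cases w)
  ultimately have "- x \<le> y" "y \<le> x" by auto
  then show ?thesis unfolding w chi_def by auto
qed

lemma chi_sub: "w \<in> Cac \<Longrightarrow> C \<in> Ofull \<Longrightarrow> w \<in> C \<Longrightarrow> chi w \<subseteq> C"
proof -
  assume "w \<in> Cac" and C: "C \<in> Ofull" and wC: "w \<in> C"
  moreover obtain x y where w: "w = (x, y)" by (cases w)
  ultimately have h: "- x \<le> y" "y \<le> x" by auto
  have Cs: "C = O0 \<or> C = Ra \<or> C = Rb \<or> C = Rc \<or> C = Cab \<or> C = Cbc \<or> C = Cac"
    using C by (simp add: Ofull_def)
  consider (z) "x = 0 \<and> y = 0" | (a) "\<not>(x = 0 \<and> y = 0)" "x = y"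
    | (b) "\<not>(x = 0 \<and> y = 0)" "x \<noteq> y" "y = 0"
    | (c) "\<not>(x = 0 \<and> y = 0)" "x \<noteq> y" "y \<noteq> 0" "y = - x"
    | (ab) "\<not>(x = 0 \<and> y = 0)" "x \<noteq> y" "y \<noteq> 0" "y \<noteq> - x" "y > 0"
    | (bc) "\<not>(x = 0 \<and> y = 0)" "x \<noteq> y" "y \<noteq> 0" "y \<noteq> - x" "\<not> y > 0"
    by blast
  then show ?thesis
  proof cases
    case z
    then have "chi w = O0" by (simp add: chi_def w)
    then show ?thesis using Cs wC w z by auto
  next
    case a
    then have "chi w = Ra" by (simp add: chi_def w)
    then show ?thesis using Cs wC w a h by auto
  next
    case b
    then have "chi w = Rb" by (simp add: chi_def w)
    then show ?thesis using Cs wC w b h by auto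
  next
    case c
    then have "chi w = Rc" by (simp add: chi_def w)
    then show ?thesis using Cs wC w c h by auto
  next
    case ab
    then have "chi w = Cab" by (simp add: chi_def w)
    then show ?thesis using Cs wC w ab h by auto
  next
    case bc
    then have "chi w = Cbc" by (simp add: chi_def w)
    then show ?thesis using Cs wC w bc h by auto
  qed
qed

lemma Ofull_sub_Cac: "C \<in> Ofull \<Longrightarrow> C \<subseteq> Cac"
  by (auto simp: Ofull_def)

lemma Cac_split: "Cac = Cab \<union> Cbc"
  by auto

lemma fan_calc:
  assumes "Opr \<subseteq> OCs" "OCs \<subseteq> Ofull"
  shows "{\<Inter>{C\<in>OCs. w\<in>C} | w. \<exists>C\<in>OCs. w\<in>C} = Opr"
proof -
  have U: "(\<exists>C\<in>OCs. w\<in>C) \<longleftrightarrow> w \<in> Cac" for w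
  proof
    assume "\<exists>C\<in>OCs. w\<in>C" then show "w \<in> Cac" using assms(2) Ofull_sub_Cac by blast
  next
    assume "w \<in> Cac"
    then have "w \<in> Cab \<or> w \<in> Cbc" using Cac_split by blast
    moreover have "Cab \<in> OCs" "Cbc \<in> OCs" using assms(1) by (auto simp: Opr_def)
    ultimately show "\<exists>C\<in>OCs. w\<in>C" by blast
  qed
  have I: "\<Inter>{C\<in>OCs. w\<in>C} = chi w" if w: "w \<in> Cac" for w
  proof
    have "chi w \<in> {C\<in>OCs. w\<in>C}" using chi_in assms(1) chi_mem[OF w] by blast
    then show "\<Inter>{C\<in>OCs. w\<in>C} \<subseteq> chi w" by (rule Inter_lower)
  next
    show "chi w \<subseteq> \<Inter>{C\<in>OCs. w\<in>C}" using chi_sub[OF w] assms(2) by blast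
  qed
  have "{\<Inter>{C\<in>OCs. w\<in>C} | w. \<exists>C\<in>OCs. w\<in>C} = {chi w | w. w \<in> Cac}"
  proof (intro set_eqI iffI)
    fix X assume "X \<in> {\<Inter>{C\<in>OCs. w\<in>C} | w. \<exists>C\<in>OCs. w\<in>C}"
    then obtain w where X: "X = \<Inter>{C\<in>OCs. w\<in>C}" and e: "\<exists>C\<in>OCs. w\<in>C" by blast
    then have w: "w \<in> Cac" using U by blast
    then have "X = chi w" using X I by simp
    then show "X \<in> {chi w | w. w \<in> Cac}" using w by blast
  next
    fix X assume "X \<in> {chi w | w. w \<in> Cac}"
    then obtain w where X: "X = chi w" and w: "w \<in> Cac" by blast
    then have "X = \<Inter>{C\<in>OCs. w\<in>C}" using I by simp
    moreover have "\<exists>C\<in>OCs. w\<in>C" using U w by blast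
    ultimately show "X \<in> {\<Inter>{C\<in>OCs. w\<in>C} | w. \<exists>C\<in>OCs. w\<in>C}" by blast
  qed
  also have "\<dots> = Opr"
  proof
    show "{chi w | w. w \<in> Cac} \<subseteq> Opr" using chi_in by blast
  next
    have "O0 = chi (0,0)" "Ra = chi (1,1)" "Rb = chi (1,0)" "Rc = chi (1,-1)"
      "Cab = chi (2,1)" "Cbc = chi (2,-1)" by (simp_all add: chi_def)
    moreover have "(0,0) \<in> Cac" "(1,1) \<in> Cac" "(1,0) \<in> Cac" "(1,-1) \<in> Cac" "(2,1) \<in> Cac" "(2,-1) \<in> Cac"
      by simp_all
    ultimately show "Opr \<subseteq> {chi w | w. w \<in> Cac}" unfolding Opr_def by blast
  qed
  finally show ?thesis .
qed

lemma notmax: "C \<subseteq> D \<Longrightarrow> D \<in> S \<Longrightarrow> x \<in> D \<Longrightarrow> x \<notin> C \<Longrightarrow> \<not>(\<forall>D\<in>S. C \<subseteq> D \<longrightarrow> D = C)"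
  by metis

lemma Opr_cases: "D \<in> Opr \<Longrightarrow> D = O0 \<or> D = Ra \<or> D = Rb \<or> D = Rc \<or> D = Cab \<or> D = Cbc"
  by (simp add: Opr_def)

lemma max_calc: "{C \<in> Opr. \<forall>D \<in> Opr. C \<subseteq> D \<longrightarrow> D = C} = {Cab, Cbc}"
proof -
  have iAB: "Cab \<in> Opr" "Cbc \<in> Opr" by (simp_all add: Opr_def)
  have nCab: "\<not> Cab \<subseteq> D" if "D \<in> Opr" "D \<noteq> Cab" for D
  proof
    assume "Cab \<subseteq> D"
    moreover have "(2,1) \<in> Cab" by simp
    ultimately have x: "(2,1) \<in> D" by (rule subsetD)
    have "D = O0 \<or> D = Ra \<or> D = Rb \<or> D = Rc \<or> D = Cbc" using Opr_cases[OF that(1)] that(2) by blast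
    then show False using x by (elim disjE) simp_all
  qed
  have nCbc: "\<not> Cbc \<subseteq> D" if "D \<in> Opr" "D \<noteq> Cbc" for D
  proof
    assume "Cbc \<subseteq> D"
    moreover have "(2,-1) \<in> Cbc" by simp
    ultimately have x: "(2,-1) \<in> D" by (rule subsetD)
    have "D = O0 \<or> D = Ra \<or> D = Rb \<or> D = Rc \<or> D = Cab" using Opr_cases[OF that(1)] that(2) by blast
    then show False using x by (elim disjE) simp_all
  qed
  have mCab: "\<forall>D\<in>Opr. Cab \<subseteq> D \<longrightarrow> D = Cab" using nCab by blast
  have mCbc: "\<forall>D\<in>Opr. Cbc \<subseteq> D \<longrightarrow> D = Cbc" using nCbc by blast
  have n0: "\<not>(\<forall>D\<in>Opr. O0 \<subseteq> D \<longrightarrow> D = O0)"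
    by (rule notmax[OF _ iAB(1), of _ "(2,1)"]) auto
  have na: "\<not>(\<forall>D\<in>Opr. Ra \<subseteq> D \<longrightarrow> D = Ra)"
    by (rule notmax[OF _ iAB(1), of _ "(2,1)"]) auto
  have nb: "\<not>(\<forall>D\<in>Opr. Rb \<subseteq> D \<longrightarrow> D = Rb)"
    by (rule notmax[OF _ iAB(1), of _ "(2,1)"]) auto
  have nc: "\<not>(\<forall>D\<in>Opr. Rc \<subseteq> D \<longrightarrow> D = Rc)"
    by (rule notmax[OF _ iAB(2), of _ "(2,-1)"]) auto
  show ?thesis
  proof (intro set_eqI iffI)
    fix C assume "C \<in> {C \<in> Opr. \<forall>D \<in> Opr. C \<subseteq> D \<longrightarrow> D = C}"
    then have CO: "C \<in> Opr" and M: "\<forall>D \<in> Opr. C \<subseteq> D \<longrightarrow> D = C" by auto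
    from Opr_cases[OF CO] show "C \<in> {Cab, Cbc}"
    proof (elim disjE)
      assume "C = O0" then show ?thesis using M n0 by simp
    next
      assume "C = Ra" then show ?thesis using M na by simp
    next
      assume "C = Rb" then show ?thesis using M nb by simp
    next
      assume "C = Rc" then show ?thesis using M nc by simp
    qed simp_all
  next
    fix C assume "C \<in> {Cab, Cbc}"
    then have "C = Cab \<or> C = Cbc" by simp
    then show "C \<in> {C \<in> Opr. \<forall>D \<in> Opr. C \<subseteq> D \<longrightarrow> D = C}"
      using iAB mCab mCbc by (elim disjE) simp_all
  qed
qed

lemma git_fan_OC:
  "git_fan wt Y = {\<Inter>{C\<in>{orbit_cone wt Y y | y. y \<in> Y}. w\<in>C} | w.
      \<exists>C\<in>{orbit_cone wt Y y | y. y \<in> Y}. w\<in>C}"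
proof -
  have e: "{orbit_cone wt Y y | y. y \<in> Y \<and> w \<in> orbit_cone wt Y y}
      = {C\<in>{orbit_cone wt Y y | y. y \<in> Y}. w\<in>C}" for w by blast
  have e2: "(\<exists>y\<in>Y. w \<in> orbit_cone wt Y y) = (\<exists>C\<in>{orbit_cone wt Y y | y. y \<in> Y}. w\<in>C)" for w
    by blast
  show ?thesis unfolding git_fan_def git_chamber_def by (simp only: e e2)
qed

definition ind :: "(nat \<times> nat) set \<Rightarrow> (nat \<times> nat \<Rightarrow> complex)" where
  "ind P = (\<lambda>p. if p \<in> P then 1 else 0)"

lemma ind_Xbar:
  assumes "P \<subseteq> pl_idx c d"
    and "\<And>i j k l. i < j \<Longrightarrow> j < k \<Longrightarrow> k < l \<Longrightarrow>
       \<not>((i,j)\<in>P \<and> (k,l)\<in>P) \<and> \<not>((i,k)\<in>P \<and> (j,l)\<in>P) \<and> \<not>((i,l)\<in>P \<and> (j,k)\<in>P)"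
  shows "ind P \<in> Xbar c d"
proof -
  have "ind P \<in> Zbar c d" using assms(1) unfolding Zbar_def ind_def by auto
  moreover have "ind P (i, j) * ind P (k, l) - ind P (i, k) * ind P (j, l) + ind P (i, l) * ind P (j, k) = 0"
    if "i < j" "j < k" "k < l" for i j k l
  proof -
    have z: "ind P a * ind P b = 0" if "\<not>(a \<in> P \<and> b \<in> P)" for a b
      using that by (auto simp: ind_def)
    have h: "\<not>((i,j)\<in>P \<and> (k,l)\<in>P)" "\<not>((i,k)\<in>P \<and> (j,l)\<in>P)" "\<not>((i,l)\<in>P \<and> (j,k)\<in>P)"
      using assms(2)[OF that] by auto
    show ?thesis unfolding z[OF h(1)] z[OF h(2)] z[OF h(3)] by simp
  qed
  ultimately show ?thesis unfolding Xbar_def by blast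
qed

lemma Opr_sub_OCs:
  assumes c: "c \<ge> 2" and d: "d \<ge> 2" and XY: "Xbar c d \<subseteq> Y"
  shows "Opr \<subseteq> {orbit_cone (pl_wt c) Y y | y. y \<in> Y}"
proof -
  have w12: "pl_wt c (1,2) = (1,1)" using c by (simp add: pl_wt_def)
  have w1c: "pl_wt c (1,c+1) = (1,0)" using c by (simp add: pl_wt_def)
  have wcc: "pl_wt c (c+1,c+2) = (1,-1)" by (simp add: pl_wt_def)
  have idx: "(1,2) \<in> pl_idx c d" "(1,c+1) \<in> pl_idx c d" "(c+1,c+2) \<in> pl_idx c d"
    using c d by (auto simp: pl_idx_def)
  have oc: "orbit_cone (pl_wt c) Y (ind P) = cone3 (\<exists>p\<in>P. pl_wt c p = (1,1))
      (\<exists>p\<in>P. pl_wt c p = (1,0)) (\<exists>p\<in>P. pl_wt c p = (1,-1))" if "ind P \<in> Y" for P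
  proof -
    have e: "(\<exists>p. ind P p \<noteq> 0 \<and> Q p) = (\<exists>p\<in>P. Q p)" for Q by (auto simp: ind_def)
    show ?thesis using orbit_cone_eq[OF that, of c] unfolding e .
  qed
  have X: "ind P \<in> Y" if "P \<subseteq> pl_idx c d"
    and "\<And>i j k l. i < j \<Longrightarrow> j < k \<Longrightarrow> k < l \<Longrightarrow>
       \<not>((i,j)\<in>P \<and> (k,l)\<in>P) \<and> \<not>((i,k)\<in>P \<and> (j,l)\<in>P) \<and> \<not>((i,l)\<in>P \<and> (j,k)\<in>P)" for P
    using ind_Xbar[OF that] XY by blast
  have y0: "ind {} \<in> Y" by (rule X) auto
  have ya: "ind {(1,2)} \<in> Y" by (rule X) (use idx in auto)
  have yb: "ind {(1,c+1)} \<in> Y" by (rule X) (use idx in auto)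
  have yc: "ind {(c+1,c+2)} \<in> Y" by (rule X) (use idx in auto)
  have yab: "ind {(1,2),(1,c+1)} \<in> Y" by (rule X) (use idx in auto)
  have ybc: "ind {(1,c+1),(c+1,c+2)} \<in> Y" by (rule X) (use idx in auto)
  have "O0 = orbit_cone (pl_wt c) Y (ind {})" using oc[OF y0] by (simp add: cone3_def)
  moreover have "Ra = orbit_cone (pl_wt c) Y (ind {(1,2)})" using oc[OF ya] w12 by (simp add: cone3_def)
  moreover have "Rb = orbit_cone (pl_wt c) Y (ind {(1,c+1)})" using oc[OF yb] w1c by (simp add: cone3_def)
  moreover have "Rc = orbit_cone (pl_wt c) Y (ind {(c+1,c+2)})" using oc[OF yc] wcc by (simp add: cone3_def)
  moreover have "Cab = orbit_cone (pl_wt c) Y (ind {(1,2),(1,c+1)})" using oc[OF yab] w12 w1c by (simp add: cone3_def)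
  moreover have "Cbc = orbit_cone (pl_wt c) Y (ind {(1,c+1),(c+1,c+2)})" using oc[OF ybc] wcc w1c by (simp add: cone3_def)
  ultimately show ?thesis unfolding Opr_def using y0 ya yb yc yab ybc by blast
qed

lemma cone3_in: "cone3 a b c \<in> Ofull"
  unfolding cone3_def Ofull_def by (simp split: if_split)

lemma OCs_sub: "{orbit_cone (pl_wt c) Y y | y. y \<in> Y} \<subseteq> Ofull"
proof
  fix C assume "C \<in> {orbit_cone (pl_wt c) Y y | y. y \<in> Y}"
  then obtain y where "y \<in> Y" "C = orbit_cone (pl_wt c) Y y" by blast
  then have "C = cone3 (\<exists>p. y p \<noteq> 0 \<and> pl_wt c p = (1,1))
      (\<exists>p. y p \<noteq> 0 \<and> pl_wt c p = (1,0)) (\<exists>p. y p \<noteq> 0 \<and> pl_wt c p = (1,-1))"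
    using orbit_cone_eq[of y Y c] by simp
  then show "C \<in> Ofull" using cone3_in by simp
qed

lemma fan_eq:
  assumes "c \<ge> 2" "d \<ge> 2" "Xbar c d \<subseteq> Y"
  shows "git_fan (pl_wt c) Y = Opr"
  unfolding git_fan_OC by (rule fan_calc[OF Opr_sub_OCs[OF assms] OCs_sub])

theorem proposition2p1:
  fixes c d :: nat
  assumes "c \<ge> 2" and "d \<ge> 2"
  shows "git_fan (pl_wt c) (Zbar c d) = git_fan (pl_wt c) (Xbar c d) \<and>
         {C \<in> git_fan (pl_wt c) (Xbar c d).
            \<forall>D \<in> git_fan (pl_wt c) (Xbar c d). C \<subseteq> D \<longrightarrow> D = C}
         = {qcone {(1, 1), (1, 0)}, qcone {(1, 0), (1, -1)}}"
proof -
  have XZ: "Xbar c d \<subseteq> Zbar c d" by (auto simp: Xbar_def)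
  have fZ: "git_fan (pl_wt c) (Zbar c d) = Opr" by (rule fan_eq[OF assms XZ])
  have fX: "git_fan (pl_wt c) (Xbar c d) = Opr" by (rule fan_eq[OF assms order_refl])
  show ?thesis unfolding fZ fX max_calc qcone_Cab qcone_Cbc by simp
qed
end
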